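(* In the standing setup below, if $y\in\Delta^{\mathcal A}$ is an accumulation point of the sequence $\{X_{\mathcal A,w_i}\mid i\in\mathbb{N}\}$ (i.e. for every $\epsilon>0$ and every $N$ there are $i>N$ and $z\in X_{\mathcal A,w_i}$ with $d(y,z)<\epsilon$), then $y\in|\mathcal S|$. Equivalently, for each $y\notin|\mathcal S|$ there are $\epsilon>0$ and $N$ with $d(y,X_{\mathcal A,w_i})>\epsilon$ for all $i>N$.
   Context: Notation: $\mathcal A\subset\mathbb{R}^d$ finite, affinely spanning $\mathbb{R}^d$; $\Delta^{\mathcal A}=\{z\in\mathbb{R}^{\mathcal A}_{\ge0}\mid\sum z_{\mathbf a}=1\}$ with homogeneous coordinates and $\ell_1$ metric $d$; $\Delta^{\mathcal F}$ the face where $z_{\mathbf a}=0$ for $\mathbf a\notin\mathcal F$. For $w\in\mathbb{R}^{\mathcal A}_>$, $X_{\mathcal A,w}$ is the closure in $\Delta^{\mathcal A}$ of $\{[w_{\mathbf a}x^{\mathbf a}\mid\mathbf a\in\mathcal A]\mid x\in\mathbb{R}^d_>\}$, $x^{\mathbf a}=\prod_j\exp(\mathbf a_j\log x_j)$. For $\lambda\in\mathbb{R}^{\mathcal A}$, $\mathcal S_\lambda$ is the regular subdivision whose faces are the sets $\{\mathbf a\mid(\mathbf a,\lambda(\mathbf a))\in F\}$, $F$ an upper face (outward normal with positive last coordinate) of $\mathrm{conv}\{(\mathbf a,\lambda(\mathbf a))\}$. The secondary fan $\Sigma_{\mathcal A}$ consists of the closures $\sigma(\mathcal S)$ of the sets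 $\{\lambda\mid\mathcal S_\lambda=\mathcal S\}$; $\mathcal S_\sigma$ is the subdivision of cone $\sigma$. For a subdivision $\mathcal S$, the geometric realization is $|\mathcal S|=\bigcup_{\mathcal F\text{ face of }\mathcal S}\Delta^{\mathcal F}$. A sequence in a cone $\tau$ is $\sigma$-bounded ($\sigma$ a face of $\tau$) if $\{\psi(v_i)\}$ is bounded for every linear $\psi$ vanishing on $\sigma$. Standing setup: $\{w_i\}\subset\mathbb{R}^{\mathcal A}_>$, $v_i=\mathrm{Log}(w_i)$; there is a cone $\tau\in\Sigma_{\mathcal A}$ containing all $v_i$ with only finitely many $v_i$ in any proper face of $\tau$; a face $\sigma$ of $\tau$ is the minimum face of boundedness (smallest face for which the sequence is bounded) of every subsequence of $\{v_i\}$; $v_i=u_i+\bar v_i$ with $u_i\in\sigma$, $\bar v_i\to v$; $w=\mathrm{Exp}(v)$; $\mathcal S=\mathcal S_\sigma$. *)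

theory Defs
  imports "HOL-Analysis.Analysis"
begin

text \<open>The finite point configuration A in R^d (R^d = an arbitrary
euclidean space 'd) is given by an injective enumeration pt :: 'n => 'd of a finite
index type 'n, A = range pt. Then R^A is real^'n (coordinate i <-> point pt i).
Faces of subdivisions are recorded as sets of indices.\<close>

definition pos_orthant :: "'d::euclidean_space set" where
  "pos_orthant = {x. \<forall>b\<in>Basis. x \<bullet> b > 0}"

definition monomial :: "'d::euclidean_space \<Rightarrow> 'd \<Rightarrow> real" where
  "monomial x a = (\<Prod>b\<in>Basis. exp ((a \<bullet> b) * ln (x \<bullet> b)))"

definition param :: "('n::finite \<Rightarrow> 'd::euclidean_space) \<Rightarrow> real^'n \<Rightarrow> 'd \<Rightarrow> real^'n" where
  "param pt w x = (\<chi> i. w $ i * monomial x (pt i) / (\<Sum>j\<in>UNIV. w $ j * monomial x (pt j)))"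

definition std_simplex :: "(real^'n::finite) set" where
  "std_simplex = {z. (\<forall>i. 0 \<le> z $ i) \<and> (\<Sum>i\<in>UNIV. z $ i) = 1}"

definition l1dist :: "real^'n::finite \<Rightarrow> real^'n \<Rightarrow> real" where
  "l1dist y z = (\<Sum>i\<in>UNIV. \<bar>y $ i - z $ i\<bar>)"

definition toric_var :: "('n::finite \<Rightarrow> 'd::euclidean_space) \<Rightarrow> real^'n \<Rightarrow> (real^'n) set" where
  "toric_var pt w = std_simplex \<inter> closure (param pt w ` pos_orthant)"

definition simplex_face :: "'n set \<Rightarrow> (real^'n::finite) set" where
  "simplex_face F = {z \<in> std_simplex. \<forall>i. i \<notin> F \<longrightarrow> z $ i = 0}"

text \<open>Regular subdivision S_lambda: the faces are the (index sets of) lifted points lying on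
an upper face of conv{(a,lambda(a))}; an upper face, with outward normal (c,c0), c0>0,
scaled to c0 = 1, is the set of maximisers of  c.a + lambda(a).\<close>
definition reg_subdiv :: "('n::finite \<Rightarrow> 'd::euclidean_space) \<Rightarrow> real^'n \<Rightarrow> 'n set set" where
  "reg_subdiv pt lam =
     {F. \<exists>c::'d. F = {i. \<forall>j. c \<bullet> pt j + lam $ j \<le> c \<bullet> pt i + lam $ i}}"

definition sec_cone :: "('n::finite \<Rightarrow> 'd::euclidean_space) \<Rightarrow> 'n set set \<Rightarrow> (real^'n) set" where
  "sec_cone pt S = closure {lam. reg_subdiv pt lam = S}"

definition secondary_fan :: "('n::finite \<Rightarrow> 'd::euclidean_space) \<Rightarrow> (real^'n) set set" where
  "secondary_fan pt = {sec_cone pt S | S. S \<in> range (reg_subdiv pt)}"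

definition subdiv_of_cone :: "('n::finite \<Rightarrow> 'd::euclidean_space) \<Rightarrow> (real^'n) set \<Rightarrow> 'n set set" where
  "subdiv_of_cone pt \<sigma> = (THE S. S \<in> range (reg_subdiv pt) \<and> sec_cone pt S = \<sigma>)"

definition geom_real :: "'n set set \<Rightarrow> (real^'n::finite) set" where
  "geom_real S = (\<Union>F\<in>S. simplex_face F)"

definition Log_vec :: "real^'n::finite \<Rightarrow> real^'n" where
  "Log_vec w = (\<chi> i. ln (w $ i))"

definition Exp_vec :: "real^'n::finite \<Rightarrow> real^'n" where
  "Exp_vec v = (\<chi> i. exp (v $ i))"

definition seq_bounded_wrt :: "(real^'n::finite) set \<Rightarrow> (nat \<Rightarrow> real^'n) \<Rightarrow> bool" where
  "seq_bounded_wrt \<sigma> v \<longleftrightarrow>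
     (\<forall>\<psi>::real^'n \<Rightarrow> real. linear \<psi> \<and> (\<forall>x\<in>\<sigma>. \<psi> x = 0) \<longrightarrow> bounded (range (\<lambda>i. \<psi> (v i))))"

definition min_face_bdd :: "(real^'n::finite) set \<Rightarrow> (real^'n) set \<Rightarrow> (nat \<Rightarrow> real^'n) \<Rightarrow> bool" where
  "min_face_bdd \<tau> \<sigma> v \<longleftrightarrow> \<sigma> face_of \<tau> \<and> seq_bounded_wrt \<sigma> v \<and>
     (\<forall>\<sigma>'. \<sigma>' face_of \<tau> \<and> seq_bounded_wrt \<sigma>' v \<longrightarrow> \<sigma> \<subseteq> \<sigma>')"

end

theory Submission
  imports Defs
begin


definition AM :: "('n::finite \<Rightarrow> 'd::euclidean_space) \<Rightarrow> real^'n \<Rightarrow> 'd \<Rightarrow> 'n set" where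
  "AM pt lam c = {i. \<forall>j. c \<bullet> pt j + lam $ j \<le> c \<bullet> pt i + lam $ i}"

definition cov :: "('n::finite \<Rightarrow> 'd::euclidean_space) \<Rightarrow> real^'n \<Rightarrow> 'n set \<Rightarrow> bool" where
  "cov pt lam T \<longleftrightarrow> (\<exists>c. T \<subseteq> AM pt lam c)"

definition prob :: "real^'n::finite \<Rightarrow> bool" where
  "prob m \<longleftrightarrow> (\<forall>j. 0 \<le> m $ j) \<and> (\<Sum>j\<in>UNIV. m $ j) = 1"

definition bary :: "('n::finite \<Rightarrow> 'd::euclidean_space) \<Rightarrow> real^'n \<Rightarrow> 'd" where
  "bary pt m = (\<Sum>j\<in>UNIV. m $ j *\<^sub>R pt j)"

definition Dset :: "('n::finite \<Rightarrow> 'd::euclidean_space) \<Rightarrow> real^'n \<Rightarrow> (real^'n) set" where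
  "Dset pt l0 = {lam. \<forall>G\<in>reg_subdiv pt l0. cov pt lam G}"

lemma reg_subdiv_AM: "reg_subdiv pt lam = range (AM pt lam)"
  unfolding reg_subdiv_def AM_def by (rule full_SetCompr_eq)

lemma AM_nonempty: "AM pt lam c \<noteq> {}"
proof -
  let ?f = "\<lambda>i. c \<bullet> pt i + lam $ i"
  have "finite (range ?f)" by simp
  have "Max (range ?f) \<in> range ?f" by (rule Max_in) auto
  then obtain i where "Max (range ?f) = ?f i" by (rule rangeE)
  moreover have "\<forall>j. ?f j \<le> Max (range ?f)" by simp
  ultimately have "i \<in> AM pt lam c" unfolding AM_def by (simp only: mem_Collect_eq) metis
  then show ?thesis by blast
qed

lemma prob_le1: "prob m \<Longrightarrow> m $ j \<le> 1"
  unfolding prob_def using member_le_sum[of j UNIV "\<lambda>j. m $ j"] by auto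

lemma inner_vec_sum: "inner (m::real^'n::finite) l = (\<Sum>j\<in>UNIV. m $ j * l $ j)"
  by (simp add: inner_vec_def)

lemma inner_bary: "c \<bullet> bary pt m = (\<Sum>j\<in>UNIV. m $ j * (c \<bullet> pt j))"
  unfolding bary_def by (simp add: inner_sum_right)

lemma cov_ineq:
  assumes cv: "cov pt lam T" and pm: "prob m" and mT: "\<And>j. j \<notin> T \<Longrightarrow> m $ j = 0"
    and pn: "prob n" and b: "bary pt m = bary pt n"
  shows "inner n lam \<le> inner m lam"
proof -
  obtain c where c: "T \<subseteq> AM pt lam c" using cv cov_def by blast
  have "T \<noteq> {}"
  proof
    assume "T = {}"
    then have "(\<Sum>j\<in>UNIV. m $ j) = 0" using mT by simp
    with pm show False unfolding prob_def by simp
  qed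
  then obtain i0 where i0: "i0 \<in> T" by auto
  define M where "M = c \<bullet> pt i0 + lam $ i0"
  have le: "c \<bullet> pt j + lam $ j \<le> M" for j using c i0 unfolding AM_def M_def by auto
  have eq: "c \<bullet> pt j + lam $ j = M" if "j \<in> T" for j
    using c that i0 le unfolding AM_def M_def by (auto intro: antisym)
  have "inner n lam = (\<Sum>j\<in>UNIV. n $ j * lam $ j)" by (rule inner_vec_sum)
  also have "\<dots> \<le> (\<Sum>j\<in>UNIV. n $ j * (M - c \<bullet> pt j))"
  proof (rule sum_mono)
    fix j
    have "0 \<le> n $ j" using pn unfolding prob_def by auto
    moreover have "lam $ j \<le> M - c \<bullet> pt j" using le[of j] by simp
    ultimately show "n $ j * lam $ j \<le> n $ j * (M - c \<bullet> pt j)" by (simp add: mult_left_mono)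
  qed
  also have "\<dots> = M - c \<bullet> bary pt n"
    using pn unfolding prob_def inner_bary by (simp add: algebra_simps sum_subtractf sum_distrib_right[symmetric] sum_distrib_left[symmetric])
  also have "\<dots> = M - c \<bullet> bary pt m" using b by simp
  also have "\<dots> = (\<Sum>j\<in>UNIV. m $ j * (M - c \<bullet> pt j))"
    using pm unfolding prob_def inner_bary by (simp add: algebra_simps sum_subtractf sum_distrib_right[symmetric] sum_distrib_left[symmetric])
  also have "\<dots> = (\<Sum>j\<in>UNIV. m $ j * lam $ j)"
    apply (rule sum.cong) apply simp
    subgoal for j using eq[of j] mT[of j] by (cases "j \<in> T") (auto simp: algebra_simps)
    done
  also have "\<dots> = inner m lam" by (simp add: inner_vec_sum)
  finally show ?thesis .
qed



lemma cone_rep: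
  fixes f :: "'k \<Rightarrow> 'e::real_vector"
  assumes K: "finite K" and x: "x \<in> convex_cone hull (f ` K)"
  shows "\<exists>\<alpha>. (\<forall>k\<in>K. 0 \<le> \<alpha> k) \<and> x = (\<Sum>k\<in>K. \<alpha> k *\<^sub>R f k)"
proof -
  from x consider "x = 0" | y c where "y \<in> convex hull (f ` K)" "0 \<le> c" "x = c *\<^sub>R y"
    unfolding convex_cone_hull_convex_hull by auto
  then show ?thesis
  proof cases
    case 1 then show ?thesis by (rule_tac x="\<lambda>_. 0" in exI) simp
  next
    case 2
    from 2(1) obtain u where u0: "\<forall>w\<in>f ` K. 0 \<le> u w" and y: "(\<Sum>w\<in>f ` K. u w *\<^sub>R w) = y"
      unfolding convex_hull_finite[OF finite_imageI[OF K]] by auto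
    define cd where "cd k = card {k' \<in> K. f k' = f k}" for k
    have cdpos: "cd k > 0" if "k \<in> K" for k
      unfolding cd_def using K that by (auto simp: card_gt_0_iff)
    define \<alpha> where "\<alpha> k = c * u (f k) / cd k" for k
    have "(\<Sum>k\<in>K. \<alpha> k *\<^sub>R f k) = (\<Sum>w\<in>f ` K. \<Sum>k\<in>{k' \<in> K. f k' = w}. \<alpha> k *\<^sub>R f k)"
      by (rule sum.image_gen[OF K])
    also have "\<dots> = (\<Sum>w\<in>f ` K. c *\<^sub>R (u w *\<^sub>R w))"
    proof (rule sum.cong[OF refl])
      fix w assume "w \<in> f ` K"
      then obtain k0 where k0: "k0 \<in> K" "w = f k0" by auto
      have "(\<Sum>k\<in>{k' \<in> K. f k' = w}. \<alpha> k *\<^sub>R f k) = (\<Sum>k\<in>{k' \<in> K. f k' = w}. (c * u w / cd k0) *\<^sub>R w)"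
      proof (rule sum.cong[OF refl])
        fix k assume "k \<in> {k' \<in> K. f k' = w}"
        then have fk: "f k = w" by simp
        have "cd k = cd k0" unfolding cd_def using fk k0 by simp
        then show "\<alpha> k *\<^sub>R f k = (c * u w / cd k0) *\<^sub>R w" unfolding \<alpha>_def using fk by simp
      qed
      also have "\<dots> = (of_nat (cd k0) * (c * u w / cd k0)) *\<^sub>R w"
      proof -
        have "card {k' \<in> K. f k' = w} = cd k0" unfolding cd_def using k0 by simp
        then show ?thesis by (simp only: sum_constant_scaleR scaleR_scaleR)
      qed
      also have "\<dots> = c *\<^sub>R (u w *\<^sub>R w)" using cdpos[OF k0(1)] by simp
      finally show "(\<Sum>k\<in>{k' \<in> K. f k' = w}. \<alpha> k *\<^sub>R f k) = c *\<^sub>R (u w *\<^sub>R w)" .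
    qed
    also have "\<dots> = x" unfolding 2(3) y[symmetric] by (simp add: scaleR_sum_right)
    finally have e: "x = (\<Sum>k\<in>K. \<alpha> k *\<^sub>R f k)" by simp
    have p: "\<forall>k\<in>K. 0 \<le> \<alpha> k"
    proof
      fix k assume "k \<in> K"
      then have "0 \<le> u (f k)" "0 < cd k" using u0 cdpos by auto
      then show "0 \<le> \<alpha> k" unfolding \<alpha>_def using 2(2) by simp
    qed
    show ?thesis by (rule exI[of _ \<alpha>], rule conjI[OF p e])
  qed
qed

lemma gale:
  fixes a :: "'k \<Rightarrow> 'e::euclidean_space" and b :: "'k \<Rightarrow> real"
  assumes K: "finite K" and nf: "\<not>(\<exists>y. \<forall>k\<in>K. inner (a k) y \<le> b k)"
  shows "\<exists>\<alpha>. (\<forall>k\<in>K. 0 \<le> \<alpha> k) \<and> (\<Sum>k\<in>K. \<alpha> k *\<^sub>R a k) = 0 \<and> (\<Sum>k\<in>K. \<alpha> k * b k) < 0"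
proof -
  define f where "f k = (a k, b k)" for k
  let ?C = "convex_cone hull (f ` K)"
  show ?thesis
  proof (cases "(0, -1) \<in> ?C")
    case True
    from cone_rep[OF K True] obtain \<alpha> where a0: "\<forall>k\<in>K. 0 \<le> \<alpha> k"
      and eq: "(0, -1) = (\<Sum>k\<in>K. \<alpha> k *\<^sub>R f k)" by blast
    have "(\<Sum>k\<in>K. \<alpha> k *\<^sub>R a k) = fst (\<Sum>k\<in>K. \<alpha> k *\<^sub>R f k)"
      by (simp add: fst_sum f_def)
    also have "\<dots> = 0" unfolding eq[symmetric] by simp
    finally have e1: "(\<Sum>k\<in>K. \<alpha> k *\<^sub>R a k) = 0" .
    have "(\<Sum>k\<in>K. \<alpha> k * b k) = snd (\<Sum>k\<in>K. \<alpha> k *\<^sub>R f k)"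
      by (simp add: snd_sum f_def)
    also have "\<dots> = -1" unfolding eq[symmetric] by simp
    finally have e2: "(\<Sum>k\<in>K. \<alpha> k * b k) < 0" by simp
    show ?thesis by (rule exI[of _ \<alpha>], intro conjI, rule a0, rule e1, rule e2)
  next
    case False
    have "closed ?C" by (simp add: K closed_convex_cone_hull)
    moreover have "convex ?C" by (rule convex_convex_cone_hull)
    ultimately obtain w \<beta> where w1: "inner w (0, -1) < \<beta>" and w2: "\<forall>x\<in>?C. \<beta> < inner w x"
      using separating_hyperplane_closed_point[OF _ _ False] by blast
    have "\<beta> < inner w 0" using w2 convex_cone_hull_contains_0 by blast
    then have "\<beta> < 0" by simp
    have nn: "0 \<le> inner w x" if "x \<in> ?C" for x
    proof (rule ccontr)
      assume "\<not> 0 \<le> inner w x"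
      then have neg: "inner w x < 0" by simp
      define t where "t = (\<beta> - 1) / inner w x"
      have "t \<ge> 0" unfolding t_def using neg \<open>\<beta> < 0\<close> by (simp add: divide_nonpos_neg)
      then have "t *\<^sub>R x \<in> ?C" using that by (rule convex_cone_hull_mul[rotated])
      then have "\<beta> < inner w (t *\<^sub>R x)" using w2 by blast
      moreover have "inner w (t *\<^sub>R x) = \<beta> - 1" using neg unfolding t_def by simp
      ultimately show False by simp
    qed
    obtain y' s where ws: "w = (y', s)" by (cases w)
    have "s > 0" using w1 \<open>\<beta> < 0\<close> ws by simp
    define y where "y = - (1/s) *\<^sub>R y'"
    have "\<forall>k\<in>K. inner (a k) y \<le> b k"
    proof
      fix k assume "k \<in> K"
      then have "f k \<in> ?C" by (simp add: hull_inc)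
      then have "0 \<le> inner w (f k)" by (rule nn)
      then have "0 \<le> inner y' (a k) + s * b k" using ws by (simp add: f_def)
      then have "- inner y' (a k) / s \<le> b k" using \<open>s > 0\<close> by (simp add: field_simps)
      then show "inner (a k) y \<le> b k" by (simp add: y_def inner_commute)
    qed
    with nf show ?thesis by blast
  qed
qed



lemma cov_iff_M: "cov pt lam T \<longleftrightarrow> (\<exists>c M. (\<forall>j. c \<bullet> pt j + lam $ j \<le> M) \<and> (\<forall>i\<in>T. M \<le> c \<bullet> pt i + lam $ i))"
proof
  assume "cov pt lam T"
  then obtain c where c: "T \<subseteq> AM pt lam c" unfolding cov_def by blast
  let ?f = "\<lambda>i. c \<bullet> pt i + lam $ i"
  define M where "M = Max (range ?f)"
  have le: "\<forall>j. ?f j \<le> M" unfolding M_def by simp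
  have "M \<in> range ?f" unfolding M_def by (rule Max_in) auto
  then obtain j0 where j0: "M = ?f j0" by (rule rangeE)
  have "\<forall>i\<in>T. M \<le> ?f i"
  proof
    fix i assume "i \<in> T"
    then have "i \<in> AM pt lam c" using c by blast
    then have "?f j0 \<le> ?f i" unfolding AM_def by simp
    then show "M \<le> ?f i" using j0 by simp
  qed
  with le show "\<exists>c M. (\<forall>j. c \<bullet> pt j + lam $ j \<le> M) \<and> (\<forall>i\<in>T. M \<le> c \<bullet> pt i + lam $ i)" by blast
next
  assume "\<exists>c M. (\<forall>j. c \<bullet> pt j + lam $ j \<le> M) \<and> (\<forall>i\<in>T. M \<le> c \<bullet> pt i + lam $ i)"
  then obtain c M where h1: "\<forall>j. c \<bullet> pt j + lam $ j \<le> M" and h2: "\<forall>i\<in>T. M \<le> c \<bullet> pt i + lam $ i" by blast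
  have "T \<subseteq> AM pt lam c"
  proof
    fix i assume "i \<in> T"
    then have "\<forall>j. c \<bullet> pt j + lam $ j \<le> c \<bullet> pt i + lam $ i" using h1 h2 by (meson order_trans)
    then show "i \<in> AM pt lam c" unfolding AM_def by simp
  qed
  then show "cov pt lam T" unfolding cov_def by blast
qed

lemma sum_if_T: "(\<Sum>i\<in>UNIV. if i \<in> T then g i else 0) = (\<Sum>i\<in>T. g i)" for g :: "'n::finite \<Rightarrow> 'x::comm_monoid_add"
  using sum.inter_restrict[of UNIV g T] by simp

lemma gale_cov:
  fixes pt :: "'n::finite \<Rightarrow> 'd::euclidean_space"
  assumes ncov: "\<not> cov pt lam T"
  shows "\<exists>m n. prob m \<and> (\<forall>j. j \<notin> T \<longrightarrow> m $ j = 0) \<and> prob n \<and> bary pt m = bary pt n \<and> inner m lam < inner n lam"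
proof -
  define K :: "('n + 'n) set" where "K = range Inl \<union> Inr ` T"
  define a :: "'n + 'n \<Rightarrow> 'd \<times> real" where "a k = (case k of Inl j \<Rightarrow> (pt j, -1) | Inr i \<Rightarrow> (- pt i, 1))" for k
  define b :: "'n + 'n \<Rightarrow> real" where "b k = (case k of Inl j \<Rightarrow> - lam $ j | Inr i \<Rightarrow> lam $ i)" for k
  have fin: "finite K" unfolding K_def by simp
  have nf: "\<not>(\<exists>y. \<forall>k\<in>K. inner (a k) y \<le> b k)"
  proof
    assume "\<exists>y. \<forall>k\<in>K. inner (a k) y \<le> b k"
    then obtain y where y: "\<forall>k\<in>K. inner (a k) y \<le> b k" by blast
    obtain c M where yc: "y = (c, M)" by (cases y)
    have "\<forall>j. c \<bullet> pt j + lam $ j \<le> M"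
    proof
      fix j
      have "inner (a (Inl j)) y \<le> b (Inl j)" using y unfolding K_def by simp
      then show "c \<bullet> pt j + lam $ j \<le> M" unfolding a_def b_def yc by (simp add: inner_commute)
    qed
    moreover have "\<forall>i\<in>T. M \<le> c \<bullet> pt i + lam $ i"
    proof
      fix i assume "i \<in> T"
      then have "inner (a (Inr i)) y \<le> b (Inr i)" using y unfolding K_def by simp
      then show "M \<le> c \<bullet> pt i + lam $ i" unfolding a_def b_def yc by (simp add: inner_commute)
    qed
    ultimately have "cov pt lam T" unfolding cov_iff_M by blast
    with ncov show False by simp
  qed
  obtain \<alpha> where \<alpha>0: "\<forall>k\<in>K. 0 \<le> \<alpha> k" and e1: "(\<Sum>k\<in>K. \<alpha> k *\<^sub>R a k) = 0"
    and e2: "(\<Sum>k\<in>K. \<alpha> k * b k) < 0" using gale[OF fin nf] by blast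
  have split: "(\<Sum>k\<in>K. g k) = (\<Sum>j\<in>UNIV. g (Inl j)) + (\<Sum>i\<in>T. g (Inr i))"
    for g :: "'n + 'n \<Rightarrow> 'x::comm_monoid_add"
  proof -
    have "(\<Sum>k\<in>K. g k) = (\<Sum>k\<in>range Inl. g k) + (\<Sum>k\<in>Inr ` T. g k)"
      unfolding K_def by (rule sum.union_disjoint) auto
    also have "\<dots> = (\<Sum>j\<in>UNIV. g (Inl j)) + (\<Sum>i\<in>T. g (Inr i))"
      by (simp add: sum.reindex)
    finally show ?thesis .
  qed
  define A where "A j = \<alpha> (Inl j)" for j
  define B where "B i = (if i \<in> T then \<alpha> (Inr i) else 0)" for i
  have A0: "0 \<le> A j" for j using \<alpha>0 unfolding A_def K_def by simp
  have B0: "0 \<le> B j" for j using \<alpha>0 unfolding B_def K_def by simp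
  have Bsum: "(\<Sum>i\<in>UNIV. B i * h i) = (\<Sum>i\<in>T. \<alpha> (Inr i) * h i)" for h :: "'n \<Rightarrow> real"
  proof -
    have "(\<Sum>i\<in>UNIV. B i * h i) = (\<Sum>i\<in>UNIV. if i \<in> T then \<alpha> (Inr i) * h i else 0)"
      by (rule sum.cong) (simp_all add: B_def)
    then show ?thesis using sum_if_T[of T "\<lambda>i. \<alpha> (Inr i) * h i"] by simp
  qed
  have BsumR: "(\<Sum>i\<in>UNIV. B i *\<^sub>R pt i) = (\<Sum>i\<in>T. \<alpha> (Inr i) *\<^sub>R pt i)"
  proof -
    have "(\<Sum>i\<in>UNIV. B i *\<^sub>R pt i) = (\<Sum>i\<in>UNIV. if i \<in> T then \<alpha> (Inr i) *\<^sub>R pt i else 0)"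
      by (rule sum.cong) (simp_all add: B_def)
    then show ?thesis using sum_if_T[of T "\<lambda>i. \<alpha> (Inr i) *\<^sub>R pt i"] by simp
  qed
  have "fst (\<Sum>k\<in>K. \<alpha> k *\<^sub>R a k) = 0" using e1 by simp
  then have "(\<Sum>j\<in>UNIV. A j *\<^sub>R pt j) + (\<Sum>i\<in>T. \<alpha> (Inr i) *\<^sub>R (- pt i)) = 0"
    unfolding fst_sum split by (simp add: a_def A_def fst_sum)
  then have EA: "(\<Sum>j\<in>UNIV. A j *\<^sub>R pt j) = (\<Sum>j\<in>UNIV. B j *\<^sub>R pt j)"
    unfolding BsumR by (simp add: sum_negf eq_neg_iff_add_eq_0)
  have "snd (\<Sum>k\<in>K. \<alpha> k *\<^sub>R a k) = 0" using e1 by simp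
  then have "(\<Sum>j\<in>UNIV. A j * (-1)) + (\<Sum>i\<in>T. \<alpha> (Inr i) * 1) = 0"
    unfolding snd_sum split by (simp add: a_def A_def snd_sum)
  then have ES: "(\<Sum>j\<in>UNIV. A j) = (\<Sum>j\<in>UNIV. B j)"
    using Bsum[of "\<lambda>_. 1"] by (simp add: sum_negf)
  have "(\<Sum>j\<in>UNIV. A j * (- lam $ j)) + (\<Sum>i\<in>T. \<alpha> (Inr i) * lam $ i) < 0"
    using e2 unfolding split by (simp add: b_def A_def)
  then have EL: "(\<Sum>j\<in>UNIV. B j * lam $ j) < (\<Sum>j\<in>UNIV. A j * lam $ j)"
    using Bsum[of "\<lambda>i. lam $ i"] by (simp add: sum_negf)
  define s where "s = (\<Sum>j\<in>UNIV. A j)"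
  have "s \<noteq> 0"
  proof
    assume s0: "s = 0"
    then have "\<forall>j\<in>UNIV. A j = 0" unfolding s_def using A0 by (simp add: sum_nonneg_eq_0_iff)
    moreover have "\<forall>j\<in>UNIV. B j = 0" using s0 ES unfolding s_def using B0 by (simp add: sum_nonneg_eq_0_iff)
    ultimately show False using EL by simp
  qed
  moreover have "s \<ge> 0" unfolding s_def using A0 by (simp add: sum_nonneg)
  ultimately have spos: "s > 0" by simp
  define m :: "real^'n" where "m = (\<chi> i. B i / s)"
  define n :: "real^'n" where "n = (\<chi> i. A i / s)"
  have pm: "prob m" unfolding prob_def m_def using B0 spos ES
    by (simp add: sum_divide_distrib[symmetric] s_def)
  have pn: "prob n" unfolding prob_def n_def using A0 spos
    by (simp add: sum_divide_distrib[symmetric] s_def)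
  have mT: "\<forall>j. j \<notin> T \<longrightarrow> m $ j = 0" unfolding m_def B_def by simp
  have bm: "bary pt m = (1/s) *\<^sub>R (\<Sum>j\<in>UNIV. B j *\<^sub>R pt j)"
    unfolding bary_def m_def by (simp add: scaleR_sum_right)
  have bn: "bary pt n = (1/s) *\<^sub>R (\<Sum>j\<in>UNIV. A j *\<^sub>R pt j)"
    unfolding bary_def n_def by (simp add: scaleR_sum_right)
  have bb: "bary pt m = bary pt n" unfolding bm bn EA ..
  have im: "inner m lam = (\<Sum>j\<in>UNIV. B j * lam $ j) / s"
    unfolding inner_vec_sum m_def by (simp add: sum_divide_distrib)
  have inn: "inner n lam = (\<Sum>j\<in>UNIV. A j * lam $ j) / s"
    unfolding inner_vec_sum n_def by (simp add: sum_divide_distrib)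
  have "inner m lam < inner n lam" unfolding im inn using EL spos by (simp add: divide_strict_right_mono)
  with pm pn mT bb show ?thesis by blast
qed



lemma bary_add: "bary pt (x + y) = bary pt x + bary pt y"
  unfolding bary_def by (simp add: scaleR_add_left sum.distrib)
lemma bary_scale: "bary pt (c *\<^sub>R x) = c *\<^sub>R bary pt x"
  unfolding bary_def by (simp add: scaleR_sum_right)
lemma bary_diff: "bary pt (x - y) = bary pt x - bary pt y"
  unfolding bary_def by (simp add: scaleR_diff_left sum_subtractf)

lemma best:
  fixes pt :: "'n::finite \<Rightarrow> 'd::euclidean_space"
  assumes pm: "prob m"
  shows "\<exists>n. prob n \<and> bary pt n = bary pt m \<and>
      (\<forall>n'. prob n' \<and> bary pt n' = bary pt m \<longrightarrow> inner n' lam \<le> inner n lam)"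
proof -
  define N where "N = {n::real^'n. (\<forall>j. 0 \<le> n $ j) \<and> (\<Sum>j\<in>UNIV. n $ j) = 1 \<and> (\<Sum>j\<in>UNIV. n $ j *\<^sub>R pt j) = bary pt m}"
  have cl: "closed N" unfolding N_def
    by (intro closed_Collect_conj closed_Collect_all closed_Collect_le closed_Collect_eq continuous_intros)
  have bd: "bounded N"
  proof -
    have "norm n \<le> 1" if "n \<in> N" for n
    proof -
      have "norm n \<le> (\<Sum>j\<in>UNIV. \<bar>n $ j\<bar>)" by (rule norm_le_l1_cart)
      also have "\<dots> = (\<Sum>j\<in>UNIV. n $ j)" using that unfolding N_def by simp
      also have "\<dots> = 1" using that unfolding N_def by simp
      finally show ?thesis .
    qed
    then show ?thesis unfolding bounded_iff by blast
  qed
  have ne: "m \<in> N" using pm unfolding N_def prob_def bary_def by simp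
  have "compact N" using cl bd by (simp add: compact_eq_bounded_closed)
  moreover have "N \<noteq> {}" using ne by blast
  moreover have "continuous_on N (\<lambda>n. inner n lam)" by (intro continuous_intros)
  ultimately obtain n where nN: "n \<in> N" and nmax: "\<forall>n'\<in>N. inner n' lam \<le> inner n lam"
    using continuous_attains_sup by blast
  have "prob n \<and> bary pt n = bary pt m" using nN unfolding N_def prob_def bary_def by simp
  moreover have "\<forall>n'. prob n' \<and> bary pt n' = bary pt m \<longrightarrow> inner n' lam \<le> inner n lam"
  proof (intro allI impI)
    fix n' assume "prob n' \<and> bary pt n' = bary pt m"
    then have "n' \<in> N" unfolding N_def prob_def bary_def by simp
    then show "inner n' lam \<le> inner n lam" using nmax by blast
  qed
  ultimately show ?thesis by blast
qed

lemma best_cov: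
  fixes pt :: "'n::finite \<Rightarrow> 'd::euclidean_space"
  assumes pn: "prob n"
    and nmax: "\<forall>n'. prob n' \<and> bary pt n' = bary pt n \<longrightarrow> inner n' lam \<le> inner n lam"
  shows "cov pt lam {j. n $ j \<noteq> 0}"
proof (rule ccontr)
  define T where "T = {j. n $ j \<noteq> 0}"
  assume "\<not> cov pt lam {j. n $ j \<noteq> 0}"
  then obtain m2 n2 where pm2: "prob m2" and m2T: "\<forall>j. j \<notin> T \<longrightarrow> m2 $ j = 0" and pn2: "prob n2"
    and b2: "bary pt m2 = bary pt n2" and i2: "inner m2 lam < inner n2 lam"
    using gale_cov unfolding T_def by blast
  have "T \<noteq> {}"
  proof
    assume "T = {}"
    then have "\<forall>j. n $ j = 0" unfolding T_def by auto
    then show False using pn unfolding prob_def by simp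
  qed
  define e where "e = Min ((\<lambda>j. n $ j) ` T)"
  have finT: "finite ((\<lambda>j. n $ j) ` T)" by simp
  have "e \<in> (\<lambda>j. n $ j) ` T" unfolding e_def using finT \<open>T \<noteq> {}\<close> by (intro Min_in) auto
  then obtain j0 where j0: "j0 \<in> T" "e = n $ j0" by blast
  have epos: "e > 0" using j0 pn unfolding T_def prob_def by (simp add: order_neq_le_trans)
  have ele: "e \<le> n $ j" if "j \<in> T" for j unfolding e_def using finT that by simp
  define n' where "n' = n + e *\<^sub>R (n2 - m2)"
  have "prob n'"
    unfolding prob_def
  proof
    show "\<forall>j. 0 \<le> n' $ j"
    proof
      fix j
      have "0 \<le> n2 $ j" using pn2 unfolding prob_def by simp
      moreover have "e * m2 $ j \<le> n $ j"
      proof (cases "j \<in> T")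
        case True
        have "m2 $ j \<le> 1" using prob_le1[OF pm2] .
        then have "e * m2 $ j \<le> e" using epos by (simp add: mult_left_le)
        then show ?thesis using ele[OF True] by simp
      next
        case False
        then show ?thesis using m2T pn unfolding prob_def by simp
      qed
      ultimately show "0 \<le> n' $ j" unfolding n'_def using epos
        by (simp add: algebra_simps) (smt (verit) mult_nonneg_nonneg)
    qed
    have "(\<Sum>j\<in>UNIV. n' $ j) = (\<Sum>j\<in>UNIV. n $ j) + e * ((\<Sum>j\<in>UNIV. n2 $ j) - (\<Sum>j\<in>UNIV. m2 $ j))"
      unfolding n'_def by (simp add: sum.distrib sum_subtractf sum_distrib_left algebra_simps)
    then show "(\<Sum>j\<in>UNIV. n' $ j) = 1" using pn pn2 pm2 unfolding prob_def by simp
  qed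
  moreover have "bary pt n' = bary pt n" unfolding n'_def bary_add bary_scale bary_diff b2 by simp
  moreover have "inner n' lam > inner n lam"
  proof -
    have "inner n' lam = inner n lam + e * (inner n2 lam - inner m2 lam)"
      unfolding n'_def by (simp add: inner_add_left inner_diff_left)
    then show ?thesis using epos i2 by simp
  qed
  ultimately show False using nmax by force
qed

lemma best_cov_exists:
  fixes pt :: "'n::finite \<Rightarrow> 'd::euclidean_space"
  assumes pm: "prob m"
  shows "\<exists>n. prob n \<and> bary pt n = bary pt m \<and> cov pt lam {j. n $ j \<noteq> 0} \<and>
      (\<forall>n'. prob n' \<and> bary pt n' = bary pt m \<longrightarrow> inner n' lam \<le> inner n lam)"
proof -
  obtain n where pn: "prob n" and bn: "bary pt n = bary pt m"
    and nmax: "\<forall>n'. prob n' \<and> bary pt n' = bary pt m \<longrightarrow> inner n' lam \<le> inner n lam"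
    using best[OF pm] by blast
  have "cov pt lam {j. n $ j \<noteq> 0}" by (rule best_cov[OF pn]) (use nmax bn in simp)
  with pn bn nmax show ?thesis by blast
qed

lemma cov_mono: "cov pt lam T \<Longrightarrow> S \<subseteq> T \<Longrightarrow> cov pt lam S"
  unfolding cov_def by blast

lemma cov_supp_ineq:
  assumes "cov pt lam {j. m $ j \<noteq> 0}" "prob m" "prob n" "bary pt m = bary pt n"
  shows "inner n lam \<le> inner m lam"
  using cov_ineq[OF assms(1,2) _ assms(3,4)] by simp



lemma ev_pos:
  fixes A B :: real
  assumes "A > 0"
  shows "eventually (\<lambda>s. 0 < A + s * B) (at_right 0)"
  unfolding eventually_at_right_field
proof (intro exI conjI allI impI)
  show "(0::real) < A / (\<bar>B\<bar> + 1)" using assms by simp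
  fix s :: real assume s: "0 < s" "s < A / (\<bar>B\<bar> + 1)"
  then have "s * (\<bar>B\<bar> + 1) < A" by (simp add: field_simps)
  moreover have "- (s * B) \<le> s * \<bar>B\<bar>" using s abs_ge_minus_self[of "s*B"] by (simp add: abs_mult)
  ultimately show "0 < A + s * B" using s(1) by (simp add: algebra_simps)
qed

lemma ev_get:
  assumes "eventually P (at_right (0::real))"
  shows "\<exists>s>0. P s"
proof -
  from assms obtain b where "b > 0" "\<forall>y>0. y < b \<longrightarrow> P y" unfolding eventually_at_right_field by blast
  then show ?thesis by (intro exI[of _ "b/2"]) auto
qed

lemma AM_eq_val: "i \<in> AM pt lam c \<Longrightarrow> j \<in> AM pt lam c \<Longrightarrow> c \<bullet> pt i + lam $ i = c \<bullet> pt j + lam $ j"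
  unfolding AM_def by (simp add: order_antisym)

lemma AM_notin: "i \<in> AM pt lam c \<Longrightarrow> j \<notin> AM pt lam c \<Longrightarrow> c \<bullet> pt j + lam $ j < c \<bullet> pt i + lam $ i"
  unfolding AM_def by (auto simp: not_le intro: less_le_trans)

lemma cov_AM: "cov pt lam (AM pt lam c)" unfolding cov_def by blast

lemma Dset_supp: "l \<in> Dset pt l0 \<Longrightarrow> cov pt l0 T \<Longrightarrow> cov pt l T"
  unfolding Dset_def reg_subdiv_AM cov_def by blast

lemma Dset_self: "l0 \<in> Dset pt l0"
  unfolding Dset_def reg_subdiv_AM by (auto intro: cov_AM)

lemma inner_mix: "inner z ((1 - t) *\<^sub>R x + t *\<^sub>R y) = (1 - t) * inner z x + t * inner z (y::real^'n::finite)"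
  by (simp add: inner_add_right)

lemma mix_cov:
  fixes pt :: "'n::finite \<Rightarrow> 'd::euclidean_space"
  assumes x: "x \<in> Dset pt l0" and y: "y \<in> Dset pt l0" and t: "0 \<le> t" "t < 1"
    and G: "G \<in> reg_subdiv pt ((1 - t) *\<^sub>R x + t *\<^sub>R y)"
  shows "cov pt x G"
proof (rule ccontr)
  define m where "m = (1 - t) *\<^sub>R x + t *\<^sub>R y"
  assume "\<not> cov pt x G"
  then obtain mu nu where pmu: "prob mu" and muG: "\<forall>j. j \<notin> G \<longrightarrow> mu $ j = 0" and pnu: "prob nu"
    and bb: "bary pt mu = bary pt nu" and ii: "inner mu x < inner nu x"
    using gale_cov by blast
  obtain ns where pns: "prob ns" and bns: "bary pt ns = bary pt mu" and cns: "cov pt l0 {j. ns $ j \<noteq> 0}"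
    and nsmax: "\<forall>n'. prob n' \<and> bary pt n' = bary pt mu \<longrightarrow> inner n' l0 \<le> inner ns l0"
    using best_cov_exists[OF pmu, of pt l0] by blast
  have cx: "cov pt x {j. ns $ j \<noteq> 0}" using Dset_supp[OF x cns] .
  have cy: "cov pt y {j. ns $ j \<noteq> 0}" using Dset_supp[OF y cns] .
  have "inner nu x \<le> inner ns x" using cov_supp_ineq[OF cx pns pnu] bns bb by simp
  moreover have "inner mu y \<le> inner ns y" using cov_supp_ineq[OF cy pns pmu] bns by simp
  moreover have "inner ns m \<le> inner mu m"
  proof -
    obtain c where "G = AM pt m c" using G unfolding reg_subdiv_AM m_def by blast
    then have "cov pt m G" by (simp add: cov_AM)
    then show ?thesis using cov_ineq[of pt m G mu ns] pmu muG pns bns by simp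
  qed
  ultimately have d1: "(1 - t) * (inner ns x - inner mu x) + t * (inner ns y - inner mu y) \<le> 0"
    unfolding m_def inner_mix by (simp add: algebra_simps)
  have d2: "(1 - t) * (inner ns x - inner mu x) > 0"
    using ii \<open>inner nu x \<le> inner ns x\<close> t by (intro mult_pos_pos) auto
  have d3: "t * (inner ns y - inner mu y) \<ge> 0"
    using \<open>inner mu y \<le> inner ns y\<close> t by (intro mult_nonneg_nonneg) auto
  from d1 d2 d3 show False by simp
qed

lemma face_from_affine:
  fixes pt :: "'n::finite \<Rightarrow> 'd::euclidean_space"
  assumes GH: "AM pt m c \<subseteq> AM pt l0 c0"
    and aff: "\<And>i. i \<in> AM pt l0 c0 \<Longrightarrow> m $ i = Mm - cm \<bullet> pt i"
  shows "AM pt m c \<in> reg_subdiv pt l0"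
proof -
  define G where "G = AM pt m c"
  define H where "H = AM pt l0 c0"
  define d where "d = c - cm"
  define f0 where "f0 j = c0 \<bullet> pt j + l0 $ j" for j
  obtain i0 where i0: "i0 \<in> G" using AM_nonempty unfolding G_def by blast
  have i0H: "i0 \<in> H" using i0 GH unfolding G_def H_def by blast
  have valH: "c \<bullet> pt i + m $ i = d \<bullet> pt i + Mm" if "i \<in> H" for i
    using aff[of i] that unfolding H_def d_def by (simp add: inner_diff_left)
  have "\<forall>j\<in>UNIV. eventually (\<lambda>s. j \<notin> H \<longrightarrow> f0 j + s * (d \<bullet> pt j) < f0 i0 + s * (d \<bullet> pt i0)) (at_right 0)"
  proof
    fix j :: 'n
    show "eventually (\<lambda>s. j \<notin> H \<longrightarrow> f0 j + s * (d \<bullet> pt j) < f0 i0 + s * (d \<bullet> pt i0)) (at_right 0)"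
    proof (cases "j \<in> H")
      case True then show ?thesis by simp
    next
      case False
      then have "f0 j < f0 i0" using AM_notin[of i0 pt l0 c0 j] i0H unfolding H_def f0_def by simp
      then have "eventually (\<lambda>s. 0 < (f0 i0 - f0 j) + s * (d \<bullet> pt i0 - d \<bullet> pt j)) (at_right 0)"
        by (intro ev_pos) simp
      then show ?thesis by eventually_elim (simp add: algebra_simps)
    qed
  qed
  then have "eventually (\<lambda>s. \<forall>j\<in>UNIV. j \<notin> H \<longrightarrow> f0 j + s * (d \<bullet> pt j) < f0 i0 + s * (d \<bullet> pt i0)) (at_right 0)"
    by (intro eventually_ball_finite) auto
  then obtain s where s: "s > 0" and sj: "\<And>j. j \<notin> H \<Longrightarrow> f0 j + s * (d \<bullet> pt j) < f0 i0 + s * (d \<bullet> pt i0)"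
    using ev_get by blast
  have f0H: "f0 i = f0 i0" if "i \<in> H" for i using AM_eq_val[of i pt l0 c0 i0] that i0H unfolding H_def f0_def by simp
  have dG: "d \<bullet> pt j \<le> d \<bullet> pt i" if "i \<in> G" "j \<in> H" for i j
  proof -
    have "c \<bullet> pt j + m $ j \<le> c \<bullet> pt i + m $ i" using that(1) unfolding G_def AM_def by simp
    moreover have "i \<in> H" using that(1) GH unfolding G_def H_def by blast
    ultimately show ?thesis using valH[of i] valH[of j] that(2) by simp
  qed
  have "AM pt l0 (c0 + s *\<^sub>R d) = G"
  proof (intro set_eqI iffI)
    fix i assume "i \<in> AM pt l0 (c0 + s *\<^sub>R d)"
    then have le: "f0 i0 + s * (d \<bullet> pt i0) \<le> f0 i + s * (d \<bullet> pt i)"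
      unfolding AM_def f0_def by (simp add: inner_add_left algebra_simps)
    have iH: "i \<in> H" using le sj[of i] by (cases "i \<in> H") auto
    then have "d \<bullet> pt i0 \<le> d \<bullet> pt i" using le f0H[OF iH] s by simp
    have "c \<bullet> pt j + m $ j \<le> c \<bullet> pt i + m $ i" for j
    proof -
      have "c \<bullet> pt j + m $ j \<le> c \<bullet> pt i0 + m $ i0" using i0 unfolding G_def AM_def by simp
      also have "\<dots> = d \<bullet> pt i0 + Mm" using valH[OF i0H] .
      also have "\<dots> \<le> d \<bullet> pt i + Mm" using \<open>d \<bullet> pt i0 \<le> d \<bullet> pt i\<close> by simp
      also have "\<dots> = c \<bullet> pt i + m $ i" using valH[OF iH] by simp
      finally show ?thesis .
    qed
    then show "i \<in> G" unfolding G_def AM_def by simp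
  next
    fix i assume iG: "i \<in> G"
    have iH: "i \<in> H" using iG GH unfolding G_def H_def by blast
    have "f0 j + s * (d \<bullet> pt j) \<le> f0 i + s * (d \<bullet> pt i)" for j
    proof (cases "j \<in> H")
      case True
      then show ?thesis using f0H[OF True] f0H[OF iH] dG[OF iG True] s by (simp add: mult_left_mono)
    next
      case False
      have "d \<bullet> pt i0 = d \<bullet> pt i" using dG[OF iG i0H] dG[OF i0 iH] by simp
      then show ?thesis using sj[OF False] f0H[OF iH] by simp
    qed
    then show "i \<in> AM pt l0 (c0 + s *\<^sub>R d)"
      unfolding AM_def f0_def by (simp add: inner_add_left algebra_simps)
  qed
  then show ?thesis unfolding G_def reg_subdiv_AM by blast
qed

lemma mix_eq:
  fixes pt :: "'n::finite \<Rightarrow> 'd::euclidean_space"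
  assumes l': "l' \<in> Dset pt l0" and t: "0 < t" "t \<le> 1"
  shows "reg_subdiv pt ((1 - t) *\<^sub>R l' + t *\<^sub>R l0) = reg_subdiv pt l0"
proof
  define m where "m = (1 - t) *\<^sub>R l' + t *\<^sub>R l0"
  show "reg_subdiv pt m \<subseteq> reg_subdiv pt l0"
  proof
    fix G assume G: "G \<in> reg_subdiv pt m"
    then obtain c where Gc: "G = AM pt m c" unfolding reg_subdiv_AM by blast
    have "m = (1 - (1 - t)) *\<^sub>R l0 + (1 - t) *\<^sub>R l'" unfolding m_def by (simp add: algebra_simps)
    then have "cov pt l0 G" using mix_cov[OF Dset_self l', of "1 - t" G] G t by simp
    then obtain c0 where GH: "G \<subseteq> AM pt l0 c0" unfolding cov_def by blast
    have "cov pt l' (AM pt l0 c0)" using l' unfolding Dset_def reg_subdiv_AM by blast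
    then obtain c' where HH: "AM pt l0 c0 \<subseteq> AM pt l' c'" unfolding cov_def by blast
    obtain h0 where h0: "h0 \<in> AM pt l0 c0" using AM_nonempty by blast
    define M0 where "M0 = c0 \<bullet> pt h0 + l0 $ h0"
    define M' where "M' = c' \<bullet> pt h0 + l' $ h0"
    have "m $ i = ((1 - t) * M' + t * M0) - ((1 - t) *\<^sub>R c' + t *\<^sub>R c0) \<bullet> pt i" if "i \<in> AM pt l0 c0" for i
    proof -
      have "c0 \<bullet> pt i + l0 $ i = M0" using AM_eq_val[OF that h0] unfolding M0_def .
      then have e0: "l0 $ i = M0 - c0 \<bullet> pt i" by simp
      have "c' \<bullet> pt i + l' $ i = M'" using AM_eq_val[of i pt l' c' h0] that h0 HH unfolding M'_def by blast
      then have e': "l' $ i = M' - c' \<bullet> pt i" by simp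
      show ?thesis unfolding m_def by (simp add: e0 e' inner_add_left algebra_simps)
    qed
    then show "G \<in> reg_subdiv pt l0" using face_from_affine[of pt m c l0 c0] GH Gc by simp
  qed
  show "reg_subdiv pt l0 \<subseteq> reg_subdiv pt m"
  proof
    fix F assume "F \<in> reg_subdiv pt l0"
    then obtain c0 where F: "F = AM pt l0 c0" unfolding reg_subdiv_AM by blast
    have "cov pt l' F" using l' \<open>F \<in> reg_subdiv pt l0\<close> unfolding Dset_def by blast
    then obtain c' where F': "F \<subseteq> AM pt l' c'" unfolding cov_def by blast
    obtain i0 where i0: "i0 \<in> F" using AM_nonempty F by blast
    define cm where "cm = (1 - t) *\<^sub>R c' + t *\<^sub>R c0"
    define f0 where "f0 j = c0 \<bullet> pt j + l0 $ j" for j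
    define f' where "f' j = c' \<bullet> pt j + l' $ j" for j
    have fm: "cm \<bullet> pt j + m $ j = (1 - t) * f' j + t * f0 j" for j
      unfolding cm_def m_def f0_def f'_def by (simp add: inner_add_left algebra_simps)
    have "AM pt m cm = F"
    proof (intro set_eqI iffI)
      fix i assume "i \<in> AM pt m cm"
      then have "(1 - t) * f' i0 + t * f0 i0 \<le> (1 - t) * f' i + t * f0 i" unfolding AM_def fm by simp
      moreover have "f' i \<le> f' i0" using F' i0 unfolding AM_def f'_def by blast
      moreover have "0 \<le> 1 - t" using t by simp
      ultimately have "t * f0 i0 \<le> t * f0 i"
        by (smt (verit) mult_left_mono)
      then have "f0 i0 \<le> f0 i" using t by simp
      moreover have "f0 j \<le> f0 i0" for j using i0 F unfolding AM_def f0_def by blast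
      ultimately have "\<forall>j. f0 j \<le> f0 i" by (meson order_trans)
      then show "i \<in> F" unfolding F AM_def f0_def by simp
    next
      fix i assume iF: "i \<in> F"
      have "(1 - t) * f' j + t * f0 j \<le> (1 - t) * f' i + t * f0 i" for j
      proof -
        have "f' j \<le> f' i" using F' iF unfolding AM_def f'_def by blast
        moreover have "f0 j \<le> f0 i" using iF unfolding F AM_def f0_def by blast
        ultimately show ?thesis using t by (intro add_mono mult_left_mono) auto
      qed
      then show "i \<in> AM pt m cm" unfolding AM_def fm by simp
    qed
    then show "F \<in> reg_subdiv pt m" unfolding reg_subdiv_AM by blast
  qed
qed



lemma cov_char:
  fixes pt :: "'n::finite \<Rightarrow> 'd::euclidean_space"
  shows "cov pt lam G \<longleftrightarrow> (\<forall>mu nu. prob mu \<and> (\<forall>j. j \<notin> G \<longrightarrow> mu $ j = 0) \<and> prob nu \<and> bary pt mu = bary pt nu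
           \<longrightarrow> inner (nu - mu) lam \<le> 0)"
proof
  assume c: "cov pt lam G"
  show "\<forall>mu nu. prob mu \<and> (\<forall>j. j \<notin> G \<longrightarrow> mu $ j = 0) \<and> prob nu \<and> bary pt mu = bary pt nu
           \<longrightarrow> inner (nu - mu) lam \<le> 0"
  proof (intro allI impI)
    fix mu nu assume h: "prob mu \<and> (\<forall>j. j \<notin> G \<longrightarrow> mu $ j = 0) \<and> prob nu \<and> bary pt mu = bary pt nu"
    then have "inner nu lam \<le> inner mu lam" using cov_ineq[OF c] by blast
    then show "inner (nu - mu) lam \<le> 0" by (simp add: inner_diff_left)
  qed
next
  assume h: "\<forall>mu nu. prob mu \<and> (\<forall>j. j \<notin> G \<longrightarrow> mu $ j = 0) \<and> prob nu \<and> bary pt mu = bary pt nu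
           \<longrightarrow> inner (nu - mu) lam \<le> 0"
  show "cov pt lam G"
  proof (rule ccontr)
    assume "\<not> cov pt lam G"
    then obtain mu nu where "prob mu" "\<forall>j. j \<notin> G \<longrightarrow> mu $ j = 0" "prob nu" "bary pt mu = bary pt nu"
      "inner mu lam < inner nu lam" using gale_cov by blast
    moreover have "inner (nu - mu) lam > 0" using calculation(5) by (simp add: inner_diff_left)
    ultimately show False using h by force
  qed
qed

definition certs :: "('n::finite \<Rightarrow> 'd::euclidean_space) \<Rightarrow> real^'n \<Rightarrow> (real^'n) set" where
  "certs pt l0 = {nu - mu | G mu nu. G \<in> reg_subdiv pt l0 \<and> prob mu \<and> (\<forall>j. j \<notin> G \<longrightarrow> mu $ j = 0)
       \<and> prob nu \<and> bary pt mu = bary pt nu}"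

lemma Dset_certs: "Dset pt l0 = (\<Inter>h\<in>certs pt l0. {lam. inner h lam \<le> 0})"
  unfolding Dset_def certs_def cov_char by blast

lemma Dset_closed: "closed (Dset pt l0)"
  unfolding Dset_certs by (intro closed_INT ballI closed_halfspace_le)

lemma Dset_convex: "convex (Dset pt l0)"
  unfolding Dset_certs by (intro convex_INT ballI convex_halfspace_le)

lemma cov_subdiv: "cov pt lam G \<longleftrightarrow> (\<exists>F\<in>reg_subdiv pt lam. G \<subseteq> F)"
  unfolding cov_def reg_subdiv_AM by blast

lemma Dset_subdiv: "reg_subdiv pt a = reg_subdiv pt b \<Longrightarrow> a \<in> Dset pt l0 \<longleftrightarrow> b \<in> Dset pt l0"
  unfolding Dset_def cov_subdiv by simp

lemma sec_cone_eq:
  fixes pt :: "'n::finite \<Rightarrow> 'd::euclidean_space"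
  shows "sec_cone pt (reg_subdiv pt l0) = Dset pt l0"
proof
  show "sec_cone pt (reg_subdiv pt l0) \<subseteq> Dset pt l0"
    unfolding sec_cone_def
  proof (rule closure_minimal)
    show "closed (Dset pt l0)" by (rule Dset_closed)
    show "{lam. reg_subdiv pt lam = reg_subdiv pt l0} \<subseteq> Dset pt l0"
      using Dset_subdiv Dset_self by blast
  qed
  show "Dset pt l0 \<subseteq> sec_cone pt (reg_subdiv pt l0)"
  proof
    fix l' assume l': "l' \<in> Dset pt l0"
    define f where "f n = (1 - inverse (real (Suc n))) *\<^sub>R l' + inverse (real (Suc n)) *\<^sub>R l0" for n
    have "\<forall>n. f n \<in> {lam. reg_subdiv pt lam = reg_subdiv pt l0}"
    proof
      fix n
      have "0 < inverse (real (Suc n))" "inverse (real (Suc n)) \<le> 1" by (auto simp: field_simps)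
      then show "f n \<in> {lam. reg_subdiv pt lam = reg_subdiv pt l0}" unfolding f_def using mix_eq[OF l'] by simp
    qed
    moreover have "f \<longlonglongrightarrow> l'"
    proof -
      have "f \<longlonglongrightarrow> (1 - 0) *\<^sub>R l' + 0 *\<^sub>R l0" unfolding f_def
        by (intro tendsto_intros LIMSEQ_inverse_real_of_nat)
      then show ?thesis by simp
    qed
    ultimately show "l' \<in> sec_cone pt (reg_subdiv pt l0)" unfolding sec_cone_def closure_sequential by blast
  qed
qed

lemma sec_cone_inj:
  fixes pt :: "'n::finite \<Rightarrow> 'd::euclidean_space"
  assumes "sec_cone pt (reg_subdiv pt l1) = sec_cone pt (reg_subdiv pt l2)"
  shows "reg_subdiv pt l1 = reg_subdiv pt l2"
proof -
  have D: "Dset pt l1 = Dset pt l2" using assms unfolding sec_cone_eq .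
  have a: "l1 \<in> Dset pt l2" using Dset_self D by blast
  have b: "l2 \<in> Dset pt l1" using Dset_self D by blast
  have "reg_subdiv pt ((1 - 1/2) *\<^sub>R l1 + (1/2) *\<^sub>R l2) = reg_subdiv pt l2" by (rule mix_eq[OF a]) auto
  moreover have "reg_subdiv pt ((1 - 1/2) *\<^sub>R l2 + (1/2) *\<^sub>R l1) = reg_subdiv pt l1" by (rule mix_eq[OF b]) auto
  moreover have "(1 - 1/2) *\<^sub>R l1 + (1/2) *\<^sub>R l2 = (1 - 1/2) *\<^sub>R l2 + ((1/2)::real) *\<^sub>R l1"
    by (simp add: add.commute)
  ultimately show ?thesis by metis
qed

lemma extrap:
  fixes pt :: "'n::finite \<Rightarrow> 'd::euclidean_space"
  assumes eq: "reg_subdiv pt lam = reg_subdiv pt l1"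
  shows "\<exists>e>0. reg_subdiv pt l1 \<subseteq> reg_subdiv pt (l1 + e *\<^sub>R (l1 - lam))"
proof -
  have "\<forall>G\<in>reg_subdiv pt l1. eventually (\<lambda>e. G \<in> reg_subdiv pt (l1 + e *\<^sub>R (l1 - lam))) (at_right 0)"
  proof
    fix G assume G1: "G \<in> reg_subdiv pt l1"
    then obtain c1 where Gc1: "G = AM pt l1 c1" unfolding reg_subdiv_AM by blast
    from G1 eq obtain c2 where Gc2: "G = AM pt lam c2" unfolding reg_subdiv_AM by blast
    obtain i0 where i0: "i0 \<in> G" using AM_nonempty Gc1 by blast
    define f1 where "f1 j = c1 \<bullet> pt j + l1 $ j" for j
    define f2 where "f2 j = c2 \<bullet> pt j + lam $ j" for j
    have "\<forall>j\<in>UNIV. eventually (\<lambda>e. j \<notin> G \<longrightarrow> 0 < (f1 i0 - f1 j) + e * ((f1 i0 - f1 j) - (f2 i0 - f2 j))) (at_right 0)"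
    proof
      fix j :: 'n
      show "eventually (\<lambda>e. j \<notin> G \<longrightarrow> 0 < (f1 i0 - f1 j) + e * ((f1 i0 - f1 j) - (f2 i0 - f2 j))) (at_right 0)"
      proof (cases "j \<in> G")
        case True then show ?thesis by simp
      next
        case False
        then have "f1 j < f1 i0" using AM_notin[of i0 pt l1 c1 j] i0 Gc1 unfolding f1_def by simp
        then have "eventually (\<lambda>e. 0 < (f1 i0 - f1 j) + e * ((f1 i0 - f1 j) - (f2 i0 - f2 j))) (at_right 0)"
          by (intro ev_pos) simp
        then show ?thesis by eventually_elim simp
      qed
    qed
    then have ev: "eventually (\<lambda>e. \<forall>j\<in>UNIV. j \<notin> G \<longrightarrow> 0 < (f1 i0 - f1 j) + e * ((f1 i0 - f1 j) - (f2 i0 - f2 j))) (at_right 0)"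
      by (intro eventually_ball_finite) auto
    show "eventually (\<lambda>e. G \<in> reg_subdiv pt (l1 + e *\<^sub>R (l1 - lam))) (at_right 0)"
      using ev
    proof eventually_elim
      case (elim e)
      define q where "q = l1 + e *\<^sub>R (l1 - lam)"
      define c where "c = c1 + e *\<^sub>R (c1 - c2)"
      have fq: "c \<bullet> pt j + q $ j = f1 j + e * (f1 j - f2 j)" for j
        unfolding c_def q_def f1_def f2_def by (simp add: inner_add_left inner_diff_left algebra_simps)
      have f1G: "f1 j = f1 i0" if "j \<in> G" for j
        using AM_eq_val[of j pt l1 c1 i0] that i0 Gc1 unfolding f1_def by simp
      have f2G: "f2 j = f2 i0" if "j \<in> G" for j
        using AM_eq_val[of j pt lam c2 i0] that i0 Gc2 unfolding f2_def by simp
      have strict: "f1 j + e * (f1 j - f2 j) < f1 i0 + e * (f1 i0 - f2 i0)" if "j \<notin> G" for j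
        using elim that by (simp add: algebra_simps)
      have "AM pt q c = G"
      proof (intro set_eqI iffI)
        fix i assume "i \<in> AM pt q c"
        then have "f1 i0 + e * (f1 i0 - f2 i0) \<le> f1 i + e * (f1 i - f2 i)" unfolding AM_def fq by simp
        then show "i \<in> G" using strict[of i] by (cases "i \<in> G") auto
      next
        fix i assume iG: "i \<in> G"
        have "f1 j + e * (f1 j - f2 j) \<le> f1 i + e * (f1 i - f2 i)" for j
          using strict[of j] f1G[OF iG] f2G[OF iG] f1G[of j] f2G[of j] by (cases "j \<in> G") auto
        then show "i \<in> AM pt q c" unfolding AM_def fq by simp
      qed
      then show ?case unfolding q_def reg_subdiv_AM by blast
    qed
  qed
  then have "eventually (\<lambda>e. \<forall>G\<in>reg_subdiv pt l1. G \<in> reg_subdiv pt (l1 + e *\<^sub>R (l1 - lam))) (at_right 0)"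
    by (intro eventually_ball_finite) auto
  then obtain e where "e > 0" "\<forall>G\<in>reg_subdiv pt l1. G \<in> reg_subdiv pt (l1 + e *\<^sub>R (l1 - lam))"
    using ev_get by blast
  then show ?thesis by blast
qed



lemma polycone_fg:
  fixes K :: "'a::euclidean_space set"
  assumes P: "polyhedron K" and C: "conic K" and ne: "K \<noteq> {}"
  shows "\<exists>V. finite V \<and> K = convex_cone hull V"
proof -
  define K' where "K' = K \<inter> cbox (-One) One"
  have "polyhedron K'" unfolding K'_def using P by (intro polyhedron_Int polyhedron_interval)
  moreover have "bounded K'" unfolding K'_def by (intro bounded_Int) simp
  ultimately have "polytope K'" by (simp add: polytope_eq_bounded_polyhedron)
  then obtain V where fV: "finite V" and V: "K' = convex hull V" unfolding polytope_def by blast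
  have cK: "convex_cone K" unfolding convex_cone_def using ne C polyhedron_imp_convex[OF P] by simp
  have "convex_cone hull V \<subseteq> K"
  proof (rule hull_minimal)
    show "V \<subseteq> K" using V hull_subset[of V convex] unfolding K'_def by blast
  qed (rule cK)
  moreover have "K \<subseteq> convex_cone hull V"
  proof
    fix x assume xK: "x \<in> K"
    show "x \<in> convex_cone hull V"
    proof (cases "x = 0")
      case True then show ?thesis by (simp add: convex_cone_hull_contains_0)
    next
      case False
      define y where "y = (1 / norm x) *\<^sub>R x"
      have yK: "y \<in> K" unfolding y_def using C xK by (simp add: conicD)
      have ny: "norm y = 1" unfolding y_def using False by simp
      have "y \<in> cbox (-One) One"
        unfolding mem_box
      proof
        fix b :: 'a assume b: "b \<in> Basis"
        have "\<bar>inner y b\<bar> \<le> 1" using Basis_le_norm[OF b, of y] ny by simp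
        then show "(- One) \<bullet> b \<le> y \<bullet> b \<and> y \<bullet> b \<le> One \<bullet> b" using b by (simp add: inner_minus_left abs_le_iff)
      qed
      then have "y \<in> convex hull V" using yK V unfolding K'_def by blast
      then have "y \<in> convex_cone hull V" using convex_hull_subset_convex_cone_hull by blast
      then have "norm x *\<^sub>R y \<in> convex_cone hull V" by (rule convex_cone_hull_mul) simp
      moreover have "norm x *\<^sub>R y = x" unfolding y_def using False by simp
      ultimately show ?thesis by simp
    qed
  qed
  ultimately show ?thesis using fV by blast
qed

lemma cov_set_polyhedron:
  fixes pt :: "'n::finite \<Rightarrow> 'd::euclidean_space"
  shows "polyhedron {lam. cov pt lam G}"
proof -
  define a1 :: "'n \<Rightarrow> (real^'n) \<times> ('d \<times> real)" where "a1 j = (axis j 1, (pt j, -1))" for j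
  define a2 :: "'n \<Rightarrow> (real^'n) \<times> ('d \<times> real)" where "a2 i = (- axis i 1, (- pt i, 1))" for i
  define P where "P = \<Inter> (range (\<lambda>j. {z. inner (a1 j) z \<le> 0})) \<inter> \<Inter> ((\<lambda>i. {z. inner (a2 i) z \<le> 0}) ` G)"
  have PP: "polyhedron P" unfolding P_def
    by (intro polyhedron_Int polyhedron_Inter) (auto intro: polyhedron_halfspace_le)
  have memP: "(lam, (c, M)) \<in> P \<longleftrightarrow> (\<forall>j. c \<bullet> pt j + lam $ j \<le> M) \<and> (\<forall>i\<in>G. M \<le> c \<bullet> pt i + lam $ i)"
    for lam c M
    unfolding P_def a1_def a2_def by (auto simp: cart_eq_inner_axis[symmetric] inner_commute algebra_simps)
  have img: "fst ` P = {lam. cov pt lam G}"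
  proof (intro set_eqI iffI)
    fix lam assume "lam \<in> fst ` P"
    then obtain c M where "(lam, (c, M)) \<in> P" by force
    then show "lam \<in> {lam. cov pt lam G}" unfolding memP cov_iff_M by blast
  next
    fix lam assume "lam \<in> {lam. cov pt lam G}"
    then obtain c M where "(lam, (c, M)) \<in> P" unfolding memP cov_iff_M by blast
    then show "lam \<in> fst ` P" by force
  qed
  have hc: "\<And>(a::(real^'n) \<times> ('d \<times> real)) x c. inner a x \<le> 0 \<Longrightarrow> 0 \<le> c \<Longrightarrow> inner a (c *\<^sub>R x) \<le> 0"
    by (simp add: mult_nonneg_nonpos)
  have "conic P" unfolding P_def conic_def using hc by blast
  moreover have "0 \<in> P" unfolding P_def by simp
  then have "P \<noteq> {}" by blast
  ultimately obtain V where fV: "finite V" and PV: "P = convex_cone hull V" using polycone_fg[OF PP] by blast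
  have "fst ` P = convex_cone hull (fst ` V)" unfolding PV by (simp add: convex_cone_hull_linear_image linear_fst)
  then have "polyhedron (fst ` P)" using fV by (simp add: polyhedron_convex_cone_hull)
  then show ?thesis using img by simp
qed

lemma Dset_polyhedron: "polyhedron (Dset pt l0)"
proof -
  have "Dset pt l0 = \<Inter> ((\<lambda>G. {lam. cov pt lam G}) ` reg_subdiv pt l0)" unfolding Dset_def by blast
  moreover have "finite (reg_subdiv pt l0)" by (rule finite_subset[of _ UNIV]) auto
  ultimately show ?thesis by (auto intro: polyhedron_Inter cov_set_polyhedron)
qed

lemma AM_scale: "0 < c \<Longrightarrow> AM pt (c *\<^sub>R lam) (c *\<^sub>R d) = AM pt lam d"
proof -
  assume c: "0 < c"
  have "(c *\<^sub>R d) \<bullet> pt j + (c *\<^sub>R lam) $ j = c * (d \<bullet> pt j + lam $ j)" for j by (simp add: algebra_simps)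
  then show ?thesis unfolding AM_def using c by simp
qed

lemma AM_zero: "AM pt 0 0 = UNIV" unfolding AM_def by simp

lemma Dset_conic: "conic (Dset pt l0)"
  unfolding conic_def
proof (intro allI impI)
  fix x and c :: real assume x: "x \<in> Dset pt l0" and c: "0 \<le> c"
  show "c *\<^sub>R x \<in> Dset pt l0" unfolding Dset_def mem_Collect_eq
  proof (intro ballI)
    fix G assume "G \<in> reg_subdiv pt l0"
    then obtain d where "G \<subseteq> AM pt x d" using x unfolding Dset_def cov_def by blast
    show "cov pt (c *\<^sub>R x) G"
    proof (cases "c = 0")
      case True then show ?thesis unfolding cov_def using AM_zero by force
    next
      case False
      then have "AM pt (c *\<^sub>R x) (c *\<^sub>R d) = AM pt x d" using c by (intro AM_scale) simp
      then show ?thesis unfolding cov_def using \<open>G \<subseteq> AM pt x d\<close> by metis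
    qed
  qed
qed

lemma Dset_fg: "\<exists>V. finite V \<and> Dset pt l0 = convex_cone hull V"
  using polycone_fg[OF Dset_polyhedron Dset_conic] Dset_self by blast



lemma face_Dset:
  fixes pt :: "'n::finite \<Rightarrow> 'd::euclidean_space"
  assumes sf: "S face_of Dset pt l0" and ne: "S \<noteq> {}"
  shows "\<exists>l1. S = Dset pt l1 \<and> l1 \<in> S"
proof -
  let ?T = "Dset pt l0"
  have cS: "convex S" using sf face_of_imp_convex by blast
  have clS: "closed S" using face_of_imp_closed[OF Dset_convex Dset_closed sf] .
  have ST: "S \<subseteq> ?T" using sf face_of_imp_subset by blast
  obtain l1 where l1: "l1 \<in> rel_interior S" using rel_interior_eq_empty[OF cS] ne by blast
  have l1S: "l1 \<in> S" using l1 rel_interior_subset by blast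
  obtain e where e: "e > 0" and eS: "cball l1 e \<inter> affine hull S \<subseteq> S"
    using l1 unfolding mem_rel_interior_cball by blast
  have A: "S \<subseteq> Dset pt l1"
  proof
    fix lam assume lamS: "lam \<in> S"
    show "lam \<in> Dset pt l1"
    proof (cases "lam = l1")
      case True then show ?thesis using Dset_self by simp
    next
      case False
      define dd where "dd = e / norm (l1 - lam)"
      have ddpos: "dd > 0" unfolding dd_def using e False by simp
      define q where "q = (1 + dd) *\<^sub>R l1 + (- dd) *\<^sub>R lam"
      have "q \<in> affine hull S" unfolding q_def
        by (rule mem_affine[OF affine_affine_hull hull_inc[OF l1S] hull_inc[OF lamS]]) simp
      moreover have "q \<in> cball l1 e"
      proof -
        have "q - l1 = dd *\<^sub>R (l1 - lam)" unfolding q_def by (simp add: algebra_simps)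
        then have "dist l1 q = norm (dd *\<^sub>R (l1 - lam))" by (metis dist_commute dist_norm)
        also have "\<dots> = dd * norm (l1 - lam)" using ddpos by simp
        also have "\<dots> = e" unfolding dd_def using False by simp
        finally show ?thesis by simp
      qed
      ultimately have qS: "q \<in> S" using eS by blast
      define t where "t = 1 / (1 + dd)"
      have t: "0 \<le> t" "t < 1" unfolding t_def using ddpos by auto
      have l1eq: "l1 = (1 - t) *\<^sub>R lam + t *\<^sub>R q"
      proof -
        have "(1 - t) *\<^sub>R lam + t *\<^sub>R q = (1 - t - t * dd) *\<^sub>R lam + (t * (1 + dd)) *\<^sub>R l1"
          unfolding q_def by (simp add: algebra_simps)
        also have "1 - t - t * dd = 0" unfolding t_def using ddpos by (simp add: field_simps)
        also have "t * (1 + dd) = 1" unfolding t_def using ddpos by simp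
        finally show ?thesis by simp
      qed
      show ?thesis unfolding Dset_def
      proof (intro CollectI ballI)
        fix G assume "G \<in> reg_subdiv pt l1"
        then show "cov pt lam G" using mix_cov[of lam pt l0 q t G] ST lamS qS t l1eq by auto
      qed
    qed
  qed
  have B: "Dset pt l1 \<subseteq> S"
  proof -
    have "sec_cone pt (reg_subdiv pt l1) \<subseteq> S"
      unfolding sec_cone_def
    proof (rule closure_minimal[OF _ clS], rule subsetI)
      fix lam assume "lam \<in> {lam. reg_subdiv pt lam = reg_subdiv pt l1}"
      then have eq: "reg_subdiv pt lam = reg_subdiv pt l1" by simp
      show "lam \<in> S"
      proof (cases "lam = l1")
        case True then show ?thesis using l1S by simp
      next
        case False
        obtain ee where ee: "ee > 0" and sub: "reg_subdiv pt l1 \<subseteq> reg_subdiv pt (l1 + ee *\<^sub>R (l1 - lam))"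
          using extrap[OF eq] by blast
        define q where "q = l1 + ee *\<^sub>R (l1 - lam)"
        have l1T: "l1 \<in> ?T" using l1S ST by blast
        have lamT: "lam \<in> ?T" using Dset_subdiv[OF eq] l1T by blast
        have qT: "q \<in> ?T" unfolding Dset_def
        proof (intro CollectI ballI)
          fix G assume "G \<in> reg_subdiv pt l0"
          then have "cov pt l1 G" using l1T unfolding Dset_def by blast
          then obtain F where "F \<in> reg_subdiv pt l1" "G \<subseteq> F" unfolding cov_subdiv by blast
          then show "cov pt q G" unfolding cov_subdiv q_def using sub by blast
        qed
        define u where "u = 1 / (1 + ee)"
        have u: "0 < u" "u < 1" unfolding u_def using ee by auto
        have l1eq: "l1 = (1 - u) *\<^sub>R lam + u *\<^sub>R q"
        proof -
          have "(1 - u) *\<^sub>R lam + u *\<^sub>R q = (1 - u - u * ee) *\<^sub>R lam + (u * (1 + ee)) *\<^sub>R l1"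
            unfolding q_def by (simp add: algebra_simps)
          also have "1 - u - u * ee = 0" unfolding u_def using ee by (simp add: field_simps)
          also have "u * (1 + ee) = 1" unfolding u_def using ee by simp
          finally show ?thesis by simp
        qed
        have "lam \<noteq> q"
        proof
          assume "lam = q"
          then have "(1 + ee) *\<^sub>R (lam - l1) = 0" unfolding q_def by (simp add: algebra_simps)
          then show False using False ee by simp
        qed
        then have "l1 \<in> open_segment lam q" unfolding in_segment using u l1eq by blast
        then show "lam \<in> S" using face_ofD[OF sf _ lamT qT l1S] by blast
      qed
    qed
    then show ?thesis unfolding sec_cone_eq .
  qed
  from A B l1S show ?thesis by blast
qed



lemma monomial_exp: "monomial x a = exp (inner a (\<Sum>b\<in>Basis. ln (x \<bullet> b) *\<^sub>R b))"
proof -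
  have "inner a (\<Sum>b\<in>Basis. ln (x \<bullet> b) *\<^sub>R b) = (\<Sum>b\<in>Basis. (a \<bullet> b) * ln (x \<bullet> b))"
    by (simp add: inner_sum_right mult.commute)
  then show ?thesis unfolding monomial_def by (simp add: exp_sum)
qed

lemma param_facts:
  fixes pt :: "'n::finite \<Rightarrow> 'd::euclidean_space"
  assumes wpos: "\<And>j. w $ j > 0"
  shows "\<And>j. 0 < param pt w x $ j" "\<And>j. param pt w x $ j \<le> 1"
    and "\<And>j. ln (param pt w x $ j) = ln (w $ j) + inner (pt j) (\<Sum>b\<in>Basis. ln (x \<bullet> b) *\<^sub>R b)
            - ln (\<Sum>k\<in>UNIV. w $ k * monomial x (pt k))"
proof -
  define L where "L = (\<Sum>b\<in>Basis. ln (x \<bullet> b) *\<^sub>R b)"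
  define Z where "Z = (\<Sum>k\<in>UNIV. w $ k * monomial x (pt k))"
  have tpos: "0 < w $ k * monomial x (pt k)" for k using wpos[of k] by (simp add: monomial_exp)
  have Zpos: "Z > 0" unfolding Z_def using tpos by (simp add: sum_pos)
  have pj: "param pt w x $ j = w $ j * monomial x (pt j) / Z" for j unfolding param_def Z_def by simp
  show "0 < param pt w x $ j" for j unfolding pj using tpos[of j] Zpos by simp
  show "param pt w x $ j \<le> 1" for j
  proof -
    have "w $ j * monomial x (pt j) \<le> Z" unfolding Z_def
      using member_le_sum[of j UNIV "\<lambda>k. w $ k * monomial x (pt k)"] tpos by (simp add: less_imp_le)
    then show ?thesis unfolding pj using Zpos by simp
  qed
  show "ln (param pt w x $ j) = ln (w $ j) + inner (pt j) (\<Sum>b\<in>Basis. ln (x \<bullet> b) *\<^sub>R b)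
            - ln (\<Sum>k\<in>UNIV. w $ k * monomial x (pt k))" for j
  proof -
    have "ln (param pt w x $ j) = ln (w $ j * monomial x (pt j)) - ln Z"
      unfolding pj using tpos[of j] Zpos by (rule ln_divide_pos)
    also have "ln (w $ j * monomial x (pt j)) = ln (w $ j) + ln (monomial x (pt j))"
      using wpos[of j] by (simp add: ln_mult monomial_exp)
    also have "ln (monomial x (pt j)) = inner (pt j) L" unfolding monomial_exp L_def by simp
    finally show ?thesis unfolding L_def Z_def .
  qed
qed

lemma log_identity:
  fixes pt :: "'n::finite \<Rightarrow> 'd::euclidean_space"
  assumes wpos: "\<And>j. w $ j > 0" and pm: "prob mu" and pn: "prob nu" and bb: "bary pt mu = bary pt nu"
  shows "(\<Sum>j\<in>UNIV. mu $ j * ln (param pt w x $ j)) - (\<Sum>j\<in>UNIV. nu $ j * ln (param pt w x $ j))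
     = inner (mu - nu) (Log_vec w)"
proof -
  define L where "L = (\<Sum>b\<in>Basis. ln (x \<bullet> b) *\<^sub>R b)"
  define Z where "Z = (\<Sum>k\<in>UNIV. w $ k * monomial x (pt k))"
  have lnp: "ln (param pt w x $ j) = ln (w $ j) + inner (pt j) L - ln Z" for j
    using param_facts(3)[OF wpos] unfolding L_def Z_def by blast
  have S: "(\<Sum>j\<in>UNIV. m $ j * ln (param pt w x $ j)) = inner m (Log_vec w) + inner L (bary pt m) - ln Z"
    if "prob m" for m
  proof -
    have "(\<Sum>j\<in>UNIV. m $ j * ln (param pt w x $ j))
        = (\<Sum>j\<in>UNIV. m $ j * ln (w $ j)) + (\<Sum>j\<in>UNIV. m $ j * inner L (pt j)) - (\<Sum>j\<in>UNIV. m $ j) * ln Z"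
      unfolding lnp by (simp add: algebra_simps sum.distrib sum_subtractf sum_distrib_right sum_distrib_left inner_commute)
    also have "(\<Sum>j\<in>UNIV. m $ j * ln (w $ j)) = inner m (Log_vec w)"
      unfolding inner_vec_sum Log_vec_def by simp
    also have "(\<Sum>j\<in>UNIV. m $ j * inner L (pt j)) = inner L (bary pt m)" by (simp add: inner_bary)
    also have "(\<Sum>j\<in>UNIV. m $ j) = 1" using that unfolding prob_def by simp
    finally show ?thesis by simp
  qed
  show ?thesis unfolding S[OF pm] S[OF pn] bb by (simp add: inner_diff_left)
qed



lemma sum_le_term:
  fixes f :: "'a \<Rightarrow> real"
  assumes "finite V" "g \<in> V" "\<And>h. h \<in> V \<Longrightarrow> f h \<le> 0"
  shows "sum f V \<le> f g"
proof -
  have "sum f V = f g + sum f (V - {g})" using assms(1,2) by (simp add: sum.remove)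
  moreover have "sum f (V - {g}) \<le> 0" using assms(3) by (intro sum_nonpos) auto
  ultimately show ?thesis by simp
qed

lemma fg_bound:
  fixes a :: "'a::euclidean_space" and \<psi> :: "'a \<Rightarrow> real"
  assumes fV: "finite V" and SV: "S = convex_cone hull V"
    and ale: "\<forall>x\<in>S. inner a x \<le> 0"
    and lin: "linear \<psi>" and p0: "\<forall>x\<in>S \<inter> {x. inner a x = 0}. \<psi> x = 0"
  shows "\<exists>C. \<forall>u\<in>S. - K \<le> inner a u \<longrightarrow> \<bar>\<psi> u\<bar> \<le> C"
proof -
  define C where "C = (\<Sum>g\<in>V. if inner a g < 0 then K * \<bar>\<psi> g\<bar> / (- inner a g) else 0)"
  have VS: "V \<subseteq> S" unfolding SV by (rule hull_subset)
  have "\<bar>\<psi> u\<bar> \<le> C" if uS: "u \<in> S" and uK: "- K \<le> inner a u" for u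
  proof -
    have "u \<in> convex_cone hull ((\<lambda>g. g) ` V)" using uS SV by simp
    then obtain \<alpha> where a0: "\<forall>g\<in>V. 0 \<le> \<alpha> g" and ue: "u = (\<Sum>g\<in>V. \<alpha> g *\<^sub>R g)"
      using cone_rep[OF fV] by blast
    have iu: "inner a u = (\<Sum>g\<in>V. \<alpha> g * inner a g)" unfolding ue by (simp add: inner_sum_right)
    have tneg: "\<alpha> h * inner a h \<le> 0" if "h \<in> V" for h
      using a0 that ale VS by (simp add: mult_nonneg_nonpos subset_iff)
    have pu: "\<psi> u = (\<Sum>g\<in>V. \<alpha> g * \<psi> g)" unfolding ue
      by (simp add: linear_sum[OF lin] linear_scale[OF lin])
    have "\<bar>\<psi> u\<bar> \<le> (\<Sum>g\<in>V. \<bar>\<alpha> g * \<psi> g\<bar>)" unfolding pu by (rule sum_abs)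
    also have "\<dots> \<le> C" unfolding C_def
    proof (rule sum_mono)
      fix g assume gV: "g \<in> V"
      show "\<bar>\<alpha> g * \<psi> g\<bar> \<le> (if inner a g < 0 then K * \<bar>\<psi> g\<bar> / (- inner a g) else 0)"
      proof (cases "inner a g < 0")
        case True
        have "\<alpha> g * inner a g \<ge> - K" using sum_le_term[OF fV gV, of "\<lambda>h. \<alpha> h * inner a h"] tneg iu uK by simp
        then have "\<alpha> g * (- inner a g) \<le> K" by simp
        then have "\<alpha> g \<le> K / (- inner a g)" using True by (simp add: field_simps)
        then have "\<alpha> g * \<bar>\<psi> g\<bar> \<le> K / (- inner a g) * \<bar>\<psi> g\<bar>" by (rule mult_right_mono) simp
        then show ?thesis using True a0 gV by (simp add: abs_mult)
      next
        case False
        then have "inner a g = 0" using ale VS gV by force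
        then have "\<psi> g = 0" using p0 VS gV by blast
        then show ?thesis using False by simp
      qed
    qed
    finally show ?thesis .
  qed
  then show ?thesis by blast
qed

theorem mainTheorem10:
  fixes pt :: "'n::finite \<Rightarrow> 'd::euclidean_space"
    and ws :: "nat \<Rightarrow> real^'n" and vs us vbar :: "nat \<Rightarrow> real^'n"
    and \<tau> \<sigma> :: "(real^'n) set" and v w y :: "real^'n"
  assumes inj: "inj pt"
    and span: "affine hull (range pt) = UNIV"
    and wpos: "\<And>i j. ws i $ j > 0"
    and vdef: "\<And>i. vs i = Log_vec (ws i)"
    and tau: "\<tau> \<in> secondary_fan pt"
    and vin: "\<And>i. vs i \<in> \<tau>"
    and proper: "\<And>F. F face_of \<tau> \<Longrightarrow> F \<noteq> \<tau> \<Longrightarrow> finite {i. vs i \<in> F}"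
    and sigma: "\<And>r. strict_mono r \<Longrightarrow> min_face_bdd \<tau> \<sigma> (vs \<circ> r)"
    and decomp: "\<And>i. vs i = us i + vbar i"
    and uin: "\<And>i. us i \<in> \<sigma>"
    and lim: "vbar \<longlonglongrightarrow> v"
    and wdef: "w = Exp_vec v"
    and ysimp: "y \<in> std_simplex"
    and acc: "\<forall>\<epsilon>>0. \<forall>N. \<exists>i>N. \<exists>z\<in>toric_var pt (ws i). l1dist y z < \<epsilon>"
  shows "y \<in> geom_real (subdiv_of_cone pt \<sigma>)"
proof -
  obtain l0 where tau_eq: "\<tau> = Dset pt l0"
    using tau unfolding secondary_fan_def by (auto simp: sec_cone_eq)
  have "min_face_bdd \<tau> \<sigma> (vs \<circ> id)" by (rule sigma) (simp add: strict_mono_def)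
  then have sf: "\<sigma> face_of \<tau>" unfolding min_face_bdd_def by simp
  have "\<sigma> \<noteq> {}" using uin by blast
  then obtain l1 where sig_eq: "\<sigma> = Dset pt l1" and l1S: "l1 \<in> \<sigma>"
    using face_Dset[of \<sigma> pt l0] sf tau_eq by blast
  have subd: "subdiv_of_cone pt \<sigma> = reg_subdiv pt l1"
    unfolding subdiv_of_cone_def
  proof (rule the_equality)
    show "reg_subdiv pt l1 \<in> range (reg_subdiv pt) \<and> sec_cone pt (reg_subdiv pt l1) = \<sigma>"
      using sig_eq sec_cone_eq by simp
  next
    fix S assume S: "S \<in> range (reg_subdiv pt) \<and> sec_cone pt S = \<sigma>"
    then obtain l2 where l2: "S = reg_subdiv pt l2" by blast
    have e1: "sec_cone pt S = \<sigma>" using S by blast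
    have e2: "sec_cone pt (reg_subdiv pt l1) = \<sigma>" using sec_cone_eq[of pt l1] sig_eq by (rule trans_sym)
    have "sec_cone pt (reg_subdiv pt l2) = sec_cone pt (reg_subdiv pt l1)"
      using e1 e2 unfolding l2 by (rule trans_sym)
    then show "S = reg_subdiv pt l1" using sec_cone_inj l2 by blast
  qed
  show ?thesis
  proof (rule ccontr)
    assume ny: "y \<notin> geom_real (subdiv_of_cone pt \<sigma>)"
    define T where "T = {j. y $ j \<noteq> 0}"
    have ncov: "\<not> cov pt l1 T"
    proof
      assume "cov pt l1 T"
      then obtain c where Tc: "T \<subseteq> AM pt l1 c" unfolding cov_def by blast
      have "y \<in> simplex_face (AM pt l1 c)" unfolding simplex_face_def using ysimp Tc unfolding T_def by auto
      moreover have "AM pt l1 c \<in> reg_subdiv pt l1" unfolding reg_subdiv_AM by simp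
      ultimately have "y \<in> geom_real (reg_subdiv pt l1)" unfolding geom_real_def by blast
      with ny subd show False by simp
    qed
    obtain mu nu where pmu: "prob mu" and muT: "\<forall>j. j \<notin> T \<longrightarrow> mu $ j = 0" and pnu: "prob nu"
      and bmn: "bary pt mu = bary pt nu" and imn: "inner mu l1 < inner nu l1"
      using gale_cov[OF ncov] by blast
    obtain ns where pns: "prob ns" and bns: "bary pt ns = bary pt mu" and cns: "cov pt l1 {j. ns $ j \<noteq> 0}"
      and nsmax: "\<forall>n'. prob n' \<and> bary pt n' = bary pt mu \<longrightarrow> inner n' l1 \<le> inner ns l1"
      using best_cov_exists[OF pmu, of pt l1] by blast
    define a where "a = mu - ns"
    have al1: "inner a l1 < 0"
    proof -
      have "inner nu l1 \<le> inner ns l1" using nsmax pnu bmn by simp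
      then show ?thesis unfolding a_def using imn by (simp add: inner_diff_left)
    qed
    have ale: "\<forall>x\<in>\<sigma>. inner a x \<le> 0"
    proof
      fix x assume "x \<in> \<sigma>"
      then have "cov pt x {j. ns $ j \<noteq> 0}" using Dset_supp[OF _ cns] sig_eq by blast
      then have "inner mu x \<le> inner ns x" using cov_supp_ineq[of pt x ns mu] pns pmu bns by simp
      then show "inner a x \<le> 0" unfolding a_def by (simp add: inner_diff_left)
    qed
    have y0: "\<And>j. 0 \<le> y $ j" and y1: "(\<Sum>j\<in>UNIV. y $ j) = 1" using ysimp unfolding std_simplex_def by auto
    have "T \<noteq> {}"
    proof
      assume "T = {}"
      then have "\<forall>j. y $ j = 0" unfolding T_def by auto
      then show False using y1 by simp
    qed
    define mm where "mm = Min ((\<lambda>j. y $ j) ` T)"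
    have finT: "finite ((\<lambda>j. y $ j) ` T)" by simp
    have "mm \<in> (\<lambda>j. y $ j) ` T" unfolding mm_def using finT \<open>T \<noteq> {}\<close> by (intro Min_in) auto
    then obtain j0 where "j0 \<in> T" "mm = y $ j0" by blast
    then have mmpos: "mm > 0" using y0[of j0] unfolding T_def by (simp add: order_neq_le_trans)
    have mmle: "mm \<le> y $ j" if "j \<in> T" for j unfolding mm_def using finT that by simp
    define K0 where "K0 = ln (mm / 4)"
    have key: "K0 \<le> inner a (vs i)" if zt: "z \<in> toric_var pt (ws i)" and zd: "l1dist y z < mm / 2" for i z
    proof -
      have "z \<in> closure (param pt (ws i) ` pos_orthant)" using zt unfolding toric_var_def by blast
      then obtain z' where z'im: "z' \<in> param pt (ws i) ` pos_orthant" and dz: "dist z' z < mm / 4"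
        unfolding closure_approachable using mmpos by (meson zero_less_divide_iff zero_less_numeral)
      then obtain x where z'x: "z' = param pt (ws i) x" by blast
      have wp: "\<And>j. 0 < ws i $ j" by (rule wpos)
      have zpos: "\<And>j. 0 < z' $ j" unfolding z'x by (rule param_facts(1)[OF wp])
      have zle: "\<And>j. z' $ j \<le> 1" unfolding z'x by (rule param_facts(2)[OF wp])
      have zT: "mm / 4 < z' $ j" if "j \<in> T" for j
      proof -
        have "\<bar>y $ j - z $ j\<bar> \<le> l1dist y z" unfolding l1dist_def
          by (rule member_le_sum) auto
        moreover have "\<bar>z' $ j - z $ j\<bar> \<le> dist z' z"
          using component_le_norm_cart[of "z' - z" j] by (simp add: dist_norm)
        moreover have "mm \<le> y $ j" using mmle that by simp
        ultimately show ?thesis using zd dz by linarith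
      qed
      have s1: "K0 \<le> (\<Sum>j\<in>UNIV. mu $ j * ln (z' $ j))"
      proof -
        have "K0 = (\<Sum>j\<in>UNIV. mu $ j * K0)" using pmu unfolding prob_def by (simp add: sum_distrib_right[symmetric])
        also have "\<dots> \<le> (\<Sum>j\<in>UNIV. mu $ j * ln (z' $ j))"
        proof (rule sum_mono)
          fix j
          show "mu $ j * K0 \<le> mu $ j * ln (z' $ j)"
          proof (cases "j \<in> T")
            case True
            have "K0 \<le> ln (z' $ j)" unfolding K0_def using zT[OF True] mmpos zpos[of j] by simp
            moreover have "0 \<le> mu $ j" using pmu unfolding prob_def by simp
            ultimately show ?thesis by (simp add: mult_left_mono)
          next
            case False then show ?thesis using muT by simp
          qed
        qed
        finally show ?thesis .
      qed
      have s2: "(\<Sum>j\<in>UNIV. ns $ j * ln (z' $ j)) \<le> 0"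
      proof (rule sum_nonpos)
        fix j
        have "ln (z' $ j) \<le> 0" using zpos[of j] zle[of j] by simp
        moreover have "0 \<le> ns $ j" using pns unfolding prob_def by simp
        ultimately show "ns $ j * ln (z' $ j) \<le> 0" by (simp add: mult_nonneg_nonpos)
      qed
      have "(\<Sum>j\<in>UNIV. mu $ j * ln (z' $ j)) - (\<Sum>j\<in>UNIV. ns $ j * ln (z' $ j)) = inner (mu - ns) (Log_vec (ws i))"
        unfolding z'x by (rule log_identity[OF wp pmu pns]) (use bns in simp)
      then have "(\<Sum>j\<in>UNIV. mu $ j * ln (z' $ j)) - (\<Sum>j\<in>UNIV. ns $ j * ln (z' $ j)) = inner a (vs i)"
        unfolding a_def vdef .
      with s1 s2 show ?thesis by linarith
    qed
    have "infinite {i. K0 \<le> inner a (vs i)}"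
      unfolding infinite_nat_iff_unbounded
    proof
      fix N
      obtain i z where "i > N" "z \<in> toric_var pt (ws i)" "l1dist y z < mm / 2"
        using acc mmpos by (meson half_gt_zero)
      then show "\<exists>i>N. i \<in> {i. K0 \<le> inner a (vs i)}" using key by blast
    qed
    then obtain r :: "nat \<Rightarrow> nat" where r: "strict_mono r" and rK: "\<forall>k. r k \<in> {i. K0 \<le> inner a (vs i)}"
      using infinite_enumerate by blast
    define F where "F = \<sigma> \<inter> {x. inner a x = 0}"
    have cS: "convex \<sigma>" using sf face_of_imp_convex by blast
    have "F face_of \<sigma>" unfolding F_def using face_of_Int_supporting_hyperplane_le[OF cS, of a 0] ale by blast
    then have Ff: "F face_of \<tau>" using sf face_of_trans by blast
    have nsub: "\<not> \<sigma> \<subseteq> F" using l1S al1 unfolding F_def by auto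
    have "min_face_bdd \<tau> \<sigma> (vs \<circ> r)" by (rule sigma[OF r])
    then have nb: "\<not> seq_bounded_wrt F (vs \<circ> r)" using Ff nsub unfolding min_face_bdd_def by blast
    have "seq_bounded_wrt F (vs \<circ> r)"
      unfolding seq_bounded_wrt_def
    proof (intro allI impI)
      fix \<psi> :: "real^'n \<Rightarrow> real" assume "linear \<psi> \<and> (\<forall>x\<in>F. \<psi> x = 0)"
      then have lin: "linear \<psi>" and p0: "\<forall>x\<in>F. \<psi> x = 0" by auto
      obtain V where fV: "finite V" and SV: "\<sigma> = convex_cone hull V" using Dset_fg[of pt l1] sig_eq by blast
      have "bounded (range vbar)" by (rule convergent_imp_bounded[OF lim])
      then obtain Bv where Bv: "\<And>i. norm (vbar i) \<le> Bv" unfolding bounded_iff by blast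
      obtain Bp where Bp: "\<And>x. norm (\<psi> x) \<le> Bp * norm x" using linear_bounded[OF lin] by blast
      define K where "K = norm a * Bv - K0"
      obtain C where C: "\<forall>u\<in>\<sigma>. - K \<le> inner a u \<longrightarrow> \<bar>\<psi> u\<bar> \<le> C"
        using fg_bound[OF fV SV ale lin, of K] p0 unfolding F_def by blast
      have "\<bar>\<psi> (vs (r k))\<bar> \<le> C + \<bar>Bp\<bar> * \<bar>Bv\<bar>" for k
      proof -
        have ab: "\<bar>inner a (vbar (r k))\<bar> \<le> norm a * Bv"
          using Cauchy_Schwarz_ineq2[of a "vbar (r k)"] Bv[of "r k"]
          by (meson mult_left_mono norm_ge_zero order_trans)
        have "K0 \<le> inner a (vs (r k))" using rK by simp
        then have "- K \<le> inner a (us (r k))" using ab unfolding K_def decomp[of "r k"]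
          by (simp add: inner_add_right)
        then have c1: "\<bar>\<psi> (us (r k))\<bar> \<le> C" using C uin by blast
        have c2: "\<bar>\<psi> (vbar (r k))\<bar> \<le> \<bar>Bp\<bar> * \<bar>Bv\<bar>"
        proof -
          have "\<bar>\<psi> (vbar (r k))\<bar> \<le> Bp * norm (vbar (r k))" using Bp[of "vbar (r k)"] by simp
          also have "\<dots> \<le> \<bar>Bp\<bar> * norm (vbar (r k))" by (rule mult_right_mono) simp_all
          also have "\<dots> \<le> \<bar>Bp\<bar> * \<bar>Bv\<bar>" using Bv[of "r k"] by (intro mult_left_mono) auto
          finally show ?thesis .
        qed
        have "\<psi> (vs (r k)) = \<psi> (us (r k)) + \<psi> (vbar (r k))" unfolding decomp using linear_add[OF lin] by simp
        then show ?thesis using c1 c2 by linarith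
      qed
      then show "bounded (range (\<lambda>i. \<psi> ((vs \<circ> r) i)))" unfolding bounded_iff by auto
    qed
    with nb show False by simp
  qed
qed


end
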